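(* For every $a\in(0,1)$, the map $(r,x)\mapsto F(r,x,\cdot)$ is Lipschitz from $(\mathcal A^e_\infty(a),\|\cdot\|_p\times|\cdot|)$ to $(L^p(\mathbb S^{n-1}),\|\cdot\|_p)$, for both $p=2$ and $p=\infty$. In addition, $\|F(r,x,\cdot)\|_{\mathrm{Lip}}$ is bounded uniformly over $(r,x)\in\mathcal A^e_\infty(a)$, and $F(r,x,\theta)$ is bounded above and away from zero uniformly over $(r,x,\theta)\in\mathcal A^e_2(a)\times\mathbb S^{n-1}$.
   Context: $n\ge2$; $\mathbb S^{n-1}$ with surface measure $\sigma$, $\omega_n=\sigma(\mathbb S^{n-1})$; $\|\cdot\|_p$ the $L^p(\sigma)$ norm; $|\cdot|$ Euclidean norm; $C_+(\mathbb S^{n-1})$ strictly positive continuous functions. $(f\star g)(z):=\omega_n^{-1}\int f(\theta)g(\langle z,\theta\rangle)d\sigma(\theta)$; fix $\eta_0\in(0,1)$ and $g(t)=\frac{c}{\omega_{n-1}}\eta_0^{-(n-1)}\phi(1-\frac{1-t}{\eta_0^2})$ with $\phi\ge0$ continuous, vanishing outside $[-1,1]$, $C^3$ on $[-1,1]$, $\|\phi\|_\infty=1$, $c$ with $1\star g\equiv1$; $\widetilde r:=r\star g$, $D_{\widetilde r}:=\{\rho\theta:0\le\rho\le\widetilde r(\theta)\}$. Fix a locally Lipschitz $\alpha:(0,\infty)\times\mathbb S^{n-1}\to[0,\infty)$ with $0\le\alpha(\ell,z)<\ell$; $H(r,z):=\alpha(\widetilde r(z),z)z$. Fix a locally Lipschitz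 $\varphi:(0,\infty)\to(0,\infty)$ and set $F(r,x,\theta):=\varphi(|\widetilde r(\theta)\theta-x|)/\int\varphi(|\widetilde r(z)z-x|)d\sigma(z)$ for $(r,x)\in\mathcal D(F):=\{(r,x):x$ in the interior of $D_{\widetilde r}\}$. For $p\in\{2,\infty\}$: $\mathcal A_p(a):=\{r\in C_+:\inf r\ge a,\|r\|_p\le a^{-1}\}$, $\mathcal A^e_p(a):=\{(r,x)\in\mathcal D(F):r\in\mathcal A_p(a),\ x\in\mathrm{Image}(H(r',\cdot))$ for some $r'\in\mathcal A_p(a)$, $r'\le r\}$. $\|\cdot\|_{\mathrm{Lip}}$ is the Lipschitz constant on $\mathbb S^{n-1}$. *)

theory Defs
  imports "HOL-Analysis.Analysis"
begin

text \<open>Surface measure on the unit sphere of a Euclidean space of dimension n,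
  defined via the cone construction: sigma(A) = n * Leb({x in ball 0 1 - {0}. x/|x| in A}).\<close>
definition surf :: "'a::euclidean_space measure" where
  "surf = scale_measure (of_nat DIM('a))
      (distr (restrict_space lborel (ball 0 1 - {0})) (restrict_space borel (sphere 0 1))
             (\<lambda>x. x /\<^sub>R norm x))"

text \<open>Surface area of the unit sphere in R^m (i.e. omega_m = sigma(S^(m-1))).\<close>
definition omega :: "nat \<Rightarrow> real" where
  "omega m = 2 * pi powr (real m / 2) / Gamma (real m / 2)"

definition conv :: "('a::euclidean_space \<Rightarrow> real) \<Rightarrow> (real \<Rightarrow> real) \<Rightarrow> 'a \<Rightarrow> real" where
  "conv f g z = (LINT \<theta>|surf. f \<theta> * g (inner z \<theta>)) / measure (surf :: 'a measure) (sphere 0 1)"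

definition Dset :: "('a::euclidean_space \<Rightarrow> real) \<Rightarrow> 'a set" where
  "Dset f = {\<rho> *\<^sub>R \<theta> | \<rho> \<theta>. \<theta> \<in> sphere 0 1 \<and> 0 \<le> \<rho> \<and> \<rho> \<le> f \<theta>}"

definition Fw :: "(real \<Rightarrow> real) \<Rightarrow> (real \<Rightarrow> real) \<Rightarrow> ('a::euclidean_space \<Rightarrow> real) \<Rightarrow> 'a \<Rightarrow> 'a \<Rightarrow> real" where
  "Fw g w r x \<theta> = w (norm (conv r g \<theta> *\<^sub>R \<theta> - x))
      / (LINT z|surf. w (norm (conv r g z *\<^sub>R z - x)))"

definition domF :: "(real \<Rightarrow> real) \<Rightarrow> ('a::euclidean_space \<Rightarrow> real) \<Rightarrow> 'a \<Rightarrow> bool" where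
  "domF g r x \<longleftrightarrow> x \<in> interior (Dset (conv r g))"

definition Cplus :: "('a::euclidean_space \<Rightarrow> real) \<Rightarrow> bool" where
  "Cplus r \<longleftrightarrow> continuous_on (sphere 0 1) r \<and> (\<forall>\<theta>\<in>sphere 0 1. 0 < r \<theta>)"

definition norm2 :: "('a::euclidean_space \<Rightarrow> real) \<Rightarrow> real" where
  "norm2 f = sqrt (LINT \<theta>|surf. (f \<theta>)\<^sup>2)"

definition normInf :: "('a::euclidean_space \<Rightarrow> real) \<Rightarrow> real" where
  "normInf f = (SUP \<theta>\<in>sphere 0 1. \<bar>f \<theta>\<bar>)"

definition Aset :: "(('a::euclidean_space \<Rightarrow> real) \<Rightarrow> real) \<Rightarrow> real \<Rightarrow> ('a \<Rightarrow> real) set" where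
  "Aset N a = {r. Cplus r \<and> (\<forall>\<theta>\<in>sphere 0 1. a \<le> r \<theta>) \<and> N r \<le> 1 / a}"

definition Aeset :: "(real \<Rightarrow> real) \<Rightarrow> (real \<times> 'a::euclidean_space \<Rightarrow> real)
    \<Rightarrow> (('a \<Rightarrow> real) \<Rightarrow> real) \<Rightarrow> real \<Rightarrow> (('a \<Rightarrow> real) \<times> 'a) set" where
  "Aeset g \<alpha> N a = {(r, x). domF g r x \<and> r \<in> Aset N a \<and>
      (\<exists>r'\<in>Aset N a. (\<forall>\<theta>\<in>sphere 0 1. r' \<theta> \<le> r \<theta>) \<and>
         x \<in> (\<lambda>z. \<alpha> (conv r' g z, z) *\<^sub>R z) ` sphere 0 1)}"

definition locally_lipschitz_on :: "'a::metric_space set \<Rightarrow> ('a \<Rightarrow> 'b::metric_space) \<Rightarrow> bool" where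
  "locally_lipschitz_on S f \<longleftrightarrow> (\<forall>x\<in>S. \<exists>e>0. \<exists>L. lipschitz_on L (ball x e \<inter> S) f)"

definition C3_on :: "real set \<Rightarrow> (real \<Rightarrow> real) \<Rightarrow> bool" where
  "C3_on S f \<longleftrightarrow> (\<exists>f1 f2 f3. (\<forall>t\<in>S. (f has_real_derivative f1 t) (at t within S)
       \<and> (f1 has_real_derivative f2 t) (at t within S)
       \<and> (f2 has_real_derivative f3 t) (at t within S)) \<and> continuous_on S f3)"

end

theory Submission imports Defs begin

lemma sqrt_div: "0 < (x::real) \<Longrightarrow> sqrt x / x = 1 / sqrt x"
  by (simp add: field_simps)

lemma space_surf: "space (surf::'a::euclidean_space measure) = sphere 0 1"
  by (simp add: surf_def space_scale_measure)
lemma sets_surf: "sets (surf::'a::euclidean_space measure) = sets (restrict_space borel (sphere 0 1))"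
  by (simp add: surf_def)

lemma meas_cont:
  fixes f :: "'a::euclidean_space \<Rightarrow> real"
  assumes "continuous_on (sphere 0 1) f"
  shows "f \<in> borel_measurable surf"
  using borel_measurable_continuous_on_restrict[OF assms] measurable_cong_sets[OF sets_surf refl]
  by blast

context
  assumes opos: "0 < measure (surf::'a::euclidean_space measure) (sphere 0 1)"
begin

lemma fin: "finite_measure (surf::'a measure)"
proof (rule finite_measureI)
  show "emeasure (surf::'a measure) (space surf) \<noteq> \<infinity>"
  proof
    assume "emeasure (surf::'a measure) (space surf) = \<infinity>"
    then have "measure (surf::'a measure) (sphere 0 1) = 0"
      by (simp add: measure_def space_surf)
    then show False using opos by simp
  qed
qed

lemma intc:
  fixes f :: "'a \<Rightarrow> real"
  assumes "continuous_on (sphere 0 1) f"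
  shows "integrable surf f"
proof -
  have "compact (f ` sphere 0 1)" by (rule compact_continuous_image[OF assms compact_sphere])
  then obtain B where B: "\<forall>y\<in>f ` sphere 0 1. norm y \<le> B"
    using compact_imp_bounded bounded_iff by metis
  show ?thesis
    apply (rule finite_measure.integrable_const_bound[OF fin, where B=B])
    using B space_surf[where 'a='a] apply (auto intro!: AE_I2)[1]
    using meas_cont[OF assms] by simp
qed

lemma ibound:
  fixes f :: "'a \<Rightarrow> real"
  assumes "\<forall>\<theta>\<in>sphere 0 1. \<bar>f \<theta>\<bar> \<le> B"
  shows "\<bar>integral\<^sup>L surf f\<bar> \<le> B * measure (surf::'a measure) (sphere 0 1)"
proof (cases "integrable surf f")
  case True
  have "\<bar>integral\<^sup>L surf f\<bar> \<le> integral\<^sup>L surf (\<lambda>x. \<bar>f x\<bar>)"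
    by (rule integral_abs_bound)
  also have "\<dots> \<le> integral\<^sup>L (surf::'a measure) (\<lambda>x. B)"
  proof (rule integral_mono_AE)
    show "integrable surf (\<lambda>x. \<bar>f x\<bar>)" using True by simp
    show "integrable (surf::'a measure) (\<lambda>x. B)" using finite_measure.integrable_const[OF fin] .
    show "AE x in surf. \<bar>f x\<bar> \<le> B" using assms space_surf[where 'a='a] by (auto intro!: AE_I2)
  qed
  also have "\<dots> = B * measure (surf::'a measure) (sphere 0 1)"
    by (simp add: space_surf)
  finally show ?thesis .
next
  case False
  have "sphere (0::'a) 1 \<noteq> {}" using opos by auto
  then have "0 \<le> B" using assms by fastforce
  then show ?thesis using False opos by (simp add: not_integrable_integral_eq)
qed

lemma imono:
  fixes f h :: "'a \<Rightarrow> real"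
  assumes "continuous_on (sphere 0 1) f" "continuous_on (sphere 0 1) h"
    "\<forall>\<theta>\<in>sphere 0 1. f \<theta> \<le> h \<theta>"
  shows "integral\<^sup>L surf f \<le> integral\<^sup>L surf h"
  apply (rule integral_mono)
  using intc[OF assms(1)] intc[OF assms(2)] assms(3) space_surf[where 'a='a] by auto

lemma iconst: "integral\<^sup>L (surf::'a measure) (\<lambda>x. c) = c * measure (surf::'a measure) (sphere 0 1)"
  by (simp add: space_surf)

lemma ilower:
  fixes f :: "'a \<Rightarrow> real"
  assumes "continuous_on (sphere 0 1) f" "\<forall>\<theta>\<in>sphere 0 1. m \<le> f \<theta>"
  shows "m * measure (surf::'a measure) (sphere 0 1) \<le> integral\<^sup>L surf f"
  using imono[of "\<lambda>x. m" f] assms iconst[of m] by (simp add: continuous_on_const del: lebesgue_integral_const)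

lemma iupper:
  fixes f :: "'a \<Rightarrow> real"
  assumes "continuous_on (sphere 0 1) f" "\<forall>\<theta>\<in>sphere 0 1. f \<theta> \<le> M"
  shows "integral\<^sup>L surf f \<le> M * measure (surf::'a measure) (sphere 0 1)"
  using imono[of f "\<lambda>x. M"] assms iconst[of M] by (simp add: continuous_on_const del: lebesgue_integral_const)

lemma idiff:
  fixes f h :: "'a \<Rightarrow> real"
  assumes "continuous_on (sphere 0 1) f" "continuous_on (sphere 0 1) h"
  shows "integral\<^sup>L surf (\<lambda>x. f x - h x) = integral\<^sup>L surf f - integral\<^sup>L surf h"
  using intc[OF assms(1)] intc[OF assms(2)] by simp

lemma L1L2:
  fixes r :: "'a \<Rightarrow> real"
  assumes rc: "continuous_on (sphere 0 1) r"
  shows "integral\<^sup>L surf (\<lambda>x. \<bar>r x\<bar>) \<le> sqrt (measure (surf::'a measure) (sphere 0 1)) * norm2 r"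
proof -
  define om where "om = measure (surf::'a measure) (sphere 0 1)"
  define A where "A = integral\<^sup>L surf (\<lambda>x. \<bar>r x\<bar>)"
  define Q where "Q = integral\<^sup>L surf (\<lambda>x. (r x)\<^sup>2)"
  define m where "m = A / om"
  have om: "0 < om" using opos om_def by simp
  have ca: "continuous_on (sphere 0 1) (\<lambda>x. \<bar>r x\<bar>)" using rc by (intro continuous_intros)
  have cq: "continuous_on (sphere 0 1) (\<lambda>x. (r x)\<^sup>2)" using rc by (intro continuous_intros)
  have ia: "integrable surf (\<lambda>x. \<bar>r x\<bar>)" by (rule intc[OF ca])
  have iq: "integrable surf (\<lambda>x. (r x)\<^sup>2)" by (rule intc[OF cq])
  have ic: "integrable (surf::'a measure) (\<lambda>x. m\<^sup>2)" using finite_measure.integrable_const[OF fin] .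
  have eq: "(\<lambda>x. (\<bar>r x\<bar> - m)\<^sup>2) = (\<lambda>x. ((r x)\<^sup>2 - 2 * m * \<bar>r x\<bar>) + m\<^sup>2)"
    by (auto simp: power2_eq_square algebra_simps)
  have "integral\<^sup>L surf (\<lambda>x. (\<bar>r x\<bar> - m)\<^sup>2) = Q - 2 * m * A + m\<^sup>2 * om"
    unfolding eq using ia iq ic by (simp add: Q_def A_def om_def space_surf)
  moreover have "0 \<le> integral\<^sup>L surf (\<lambda>x. (\<bar>r x\<bar> - m)\<^sup>2)" by simp
  ultimately have "0 \<le> Q - 2 * m * A + m\<^sup>2 * om" by simp
  moreover have "Q - 2 * m * A + m\<^sup>2 * om = (om * Q - A\<^sup>2) / om"
    using om unfolding m_def by (simp add: power2_eq_square diff_divide_distrib add_divide_distrib)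
  ultimately have "0 \<le> (om * Q - A\<^sup>2) / om" by simp
  then have "0 \<le> om * Q - A\<^sup>2" using om by (simp add: zero_le_divide_iff)
  then have "A\<^sup>2 \<le> om * Q" by simp
  moreover have "0 \<le> A" unfolding A_def by simp
  ultimately have "A \<le> sqrt (om * Q)" by (simp add: real_le_rsqrt)
  then show ?thesis by (simp add: A_def om_def Q_def norm2_def real_sqrt_mult)
qed

end

context
  fixes g :: "real \<Rightarrow> real" and Gb Kg :: real
  assumes opos: "0 < measure (surf::'a::euclidean_space measure) (sphere 0 1)"
    and gnn: "\<forall>t. 0 \<le> g t" and gb: "\<forall>t. g t \<le> Gb"
    and glip: "\<forall>s t. \<bar>g s - g t\<bar> \<le> Kg * \<bar>s - t\<bar>"
    and cn: "\<forall>z\<in>sphere (0::'a) 1. conv (\<lambda>_. 1) g z = 1"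
begin

lemma Kg_nn: "0 \<le> Kg"
proof -
  have "\<bar>g 1 - g 0\<bar> \<le> Kg * \<bar>1 - 0\<bar>" using glip by blast
  then show ?thesis by simp
qed

lemma Gb_nn: "0 \<le> Gb" using gnn gb by (meson order_trans)

lemma gcont: "continuous_on UNIV g"
proof -
  have "Kg-lipschitz_on UNIV g"
    using glip Kg_nn by (intro lipschitz_onI) (auto simp: dist_real_def)
  then show ?thesis by (rule lipschitz_on_continuous_on)
qed

lemma cprod:
  fixes r :: "'a \<Rightarrow> real"
  assumes "continuous_on (sphere 0 1) r"
  shows "continuous_on (sphere 0 1) (\<lambda>\<theta>. r \<theta> * g (inner z \<theta>))"
  using assms by (intro continuous_intros continuous_on_compose2[OF gcont]) auto

lemma om_pos: "0 < measure (surf::'a measure) (sphere 0 1)" using opos .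

lemma c_diff:
  fixes r r' :: "'a \<Rightarrow> real"
  assumes "continuous_on (sphere 0 1) r" "continuous_on (sphere 0 1) r'"
  shows "conv r g z - conv r' g z = conv (\<lambda>\<theta>. r \<theta> - r' \<theta>) g z"
proof -
  have "integral\<^sup>L surf (\<lambda>\<theta>. (r \<theta> - r' \<theta>) * g (inner z \<theta>))
     = integral\<^sup>L surf (\<lambda>\<theta>. r \<theta> * g (inner z \<theta>) - r' \<theta> * g (inner z \<theta>))"
    by (simp add: algebra_simps)
  also have "\<dots> = integral\<^sup>L surf (\<lambda>\<theta>. r \<theta> * g (inner z \<theta>)) - integral\<^sup>L surf (\<lambda>\<theta>. r' \<theta> * g (inner z \<theta>))"
    by (rule idiff[OF opos cprod[OF assms(1)] cprod[OF assms(2)]])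
  finally show ?thesis unfolding conv_def by (simp add: diff_divide_distrib)
qed

lemma conv_eq:
  fixes r :: "'a \<Rightarrow> real"
  shows "conv r g z = integral\<^sup>L surf (\<lambda>\<theta>. r \<theta> * g (inner z \<theta>)) / measure (surf::'a measure) (sphere 0 1)"
  by (simp add: conv_def)

lemma c_L2:
  fixes r :: "'a \<Rightarrow> real"
  assumes rc: "continuous_on (sphere 0 1) r"
  shows "\<bar>conv r g z\<bar> \<le> Gb * norm2 r / sqrt (measure (surf::'a measure) (sphere 0 1))"
proof -
  define om where "om = measure (surf::'a measure) (sphere 0 1)"
  have om: "0 < om" using opos om_def by simp
  have "\<bar>integral\<^sup>L surf (\<lambda>\<theta>. r \<theta> * g (inner z \<theta>))\<bar> \<le> integral\<^sup>L surf (\<lambda>\<theta>. \<bar>r \<theta> * g (inner z \<theta>)\<bar>)"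
    by (rule integral_abs_bound)
  also have "\<dots> \<le> integral\<^sup>L surf (\<lambda>\<theta>. Gb * \<bar>r \<theta>\<bar>)"
  proof (rule imono[OF opos])
    show "continuous_on (sphere 0 1) (\<lambda>\<theta>. \<bar>r \<theta> * g (inner z \<theta>)\<bar>)"
      by (intro continuous_on_rabs continuous_on_diff cprod[OF rc])
    show "continuous_on (sphere 0 1) (\<lambda>\<theta>. Gb * \<bar>r \<theta>\<bar>)" using rc by (intro continuous_intros)
    show "\<forall>\<theta>\<in>sphere 0 1. \<bar>r \<theta> * g (inner z \<theta>)\<bar> \<le> Gb * \<bar>r \<theta>\<bar>"
    proof
      fix \<theta> :: 'a
      have "\<bar>r \<theta>\<bar> * g (inner z \<theta>) \<le> \<bar>r \<theta>\<bar> * Gb" using gb by (intro mult_left_mono) auto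
      then show "\<bar>r \<theta> * g (inner z \<theta>)\<bar> \<le> Gb * \<bar>r \<theta>\<bar>" using gnn by (simp add: abs_mult mult.commute)
    qed
  qed
  also have "\<dots> = Gb * integral\<^sup>L surf (\<lambda>\<theta>. \<bar>r \<theta>\<bar>)" by simp
  also have "\<dots> \<le> Gb * (sqrt om * norm2 r)"
    using L1L2[OF opos rc] Gb_nn om_def by (intro mult_left_mono) auto
  finally have "\<bar>integral\<^sup>L surf (\<lambda>\<theta>. r \<theta> * g (inner z \<theta>))\<bar> / om \<le> Gb * (sqrt om * norm2 r) / om"
    using om by (simp add: divide_right_mono)
  also have "Gb * (sqrt om * norm2 r) / om = Gb * norm2 r * (sqrt om / om)" by simp
  also have "\<dots> = Gb * norm2 r / sqrt om" using sqrt_div[OF om] by simp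
  finally show ?thesis by (simp add: conv_eq om_def)
qed

lemma c_Inf:
  fixes r :: "'a \<Rightarrow> real"
  assumes "\<forall>\<theta>\<in>sphere 0 1. \<bar>r \<theta>\<bar> \<le> B"
  shows "\<bar>conv r g z\<bar> \<le> Gb * B"
proof -
  define om where "om = measure (surf::'a measure) (sphere 0 1)"
  have om: "0 < om" using opos om_def by simp
  have "\<forall>\<theta>\<in>sphere 0 1. \<bar>r \<theta> * g (inner z \<theta>)\<bar> \<le> Gb * B"
    using assms gnn gb Gb_nn by (auto simp: abs_mult mult.commute intro!: mult_mono)
  from ibound[OF opos this] have "\<bar>integral\<^sup>L surf (\<lambda>\<theta>. r \<theta> * g (inner z \<theta>))\<bar> \<le> Gb * B * om"
    by (simp add: om_def)
  then show ?thesis using om by (simp add: conv_eq om_def[symmetric] pos_divide_le_eq)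
qed

lemma c_lip:
  fixes r :: "'a \<Rightarrow> real"
  assumes rc: "continuous_on (sphere 0 1) r"
  shows "\<bar>conv r g z - conv r g z'\<bar> \<le> Kg * norm (z - z') * norm2 r / sqrt (measure (surf::'a measure) (sphere 0 1))"
proof -
  define om where "om = measure (surf::'a measure) (sphere 0 1)"
  have om: "0 < om" using opos om_def by simp
  have eqd: "conv r g z - conv r g z' = integral\<^sup>L surf (\<lambda>\<theta>. r \<theta> * g (inner z \<theta>) - r \<theta> * g (inner z' \<theta>)) / om"
    using idiff[OF opos cprod[OF rc] cprod[OF rc]] by (simp add: conv_eq om_def diff_divide_distrib)
  have "\<bar>integral\<^sup>L surf (\<lambda>\<theta>. r \<theta> * g (inner z \<theta>) - r \<theta> * g (inner z' \<theta>))\<bar>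
      \<le> integral\<^sup>L surf (\<lambda>\<theta>. \<bar>r \<theta> * g (inner z \<theta>) - r \<theta> * g (inner z' \<theta>)\<bar>)"
    by (rule integral_abs_bound)
  also have "\<dots> \<le> integral\<^sup>L surf (\<lambda>\<theta>. (Kg * norm (z - z')) * \<bar>r \<theta>\<bar>)"
  proof (rule imono[OF opos])
    show "continuous_on (sphere 0 1) (\<lambda>\<theta>. \<bar>r \<theta> * g (inner z \<theta>) - r \<theta> * g (inner z' \<theta>)\<bar>)"
      by (intro continuous_on_rabs continuous_on_diff cprod[OF rc])
    show "continuous_on (sphere 0 1) (\<lambda>\<theta>. (Kg * norm (z - z')) * \<bar>r \<theta>\<bar>)" using rc by (intro continuous_intros)
    show "\<forall>\<theta>\<in>sphere 0 1. \<bar>r \<theta> * g (inner z \<theta>) - r \<theta> * g (inner z' \<theta>)\<bar> \<le> (Kg * norm (z - z')) * \<bar>r \<theta>\<bar>"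
    proof
      fix \<theta> :: 'a assume th: "\<theta> \<in> sphere 0 1"
      have "\<bar>inner z \<theta> - inner z' \<theta>\<bar> = \<bar>inner (z - z') \<theta>\<bar>" by (simp add: inner_diff_left)
      also have "\<dots> \<le> norm (z - z') * norm \<theta>" by (rule Cauchy_Schwarz_ineq2)
      finally have "\<bar>inner z \<theta> - inner z' \<theta>\<bar> \<le> norm (z - z')" using th by simp
      moreover have "\<bar>g (inner z \<theta>) - g (inner z' \<theta>)\<bar> \<le> Kg * \<bar>inner z \<theta> - inner z' \<theta>\<bar>"
        using glip by blast
      ultimately have "\<bar>g (inner z \<theta>) - g (inner z' \<theta>)\<bar> \<le> Kg * norm (z - z')"
        using Kg_nn mult_left_mono order_trans by blast
      then have "\<bar>r \<theta>\<bar> * \<bar>g (inner z \<theta>) - g (inner z' \<theta>)\<bar> \<le> \<bar>r \<theta>\<bar> * (Kg * norm (z - z'))"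
        by (intro mult_left_mono) auto
      then show "\<bar>r \<theta> * g (inner z \<theta>) - r \<theta> * g (inner z' \<theta>)\<bar> \<le> (Kg * norm (z - z')) * \<bar>r \<theta>\<bar>"
        by (metis abs_mult right_diff_distrib mult.commute)
    qed
  qed
  also have "\<dots> = (Kg * norm (z - z')) * integral\<^sup>L surf (\<lambda>\<theta>. \<bar>r \<theta>\<bar>)" by simp
  also have "\<dots> \<le> (Kg * norm (z - z')) * (sqrt om * norm2 r)"
    using L1L2[OF opos rc] Kg_nn om_def by (intro mult_left_mono) auto
  finally have "\<bar>integral\<^sup>L surf (\<lambda>\<theta>. r \<theta> * g (inner z \<theta>) - r \<theta> * g (inner z' \<theta>))\<bar> / om
      \<le> (Kg * norm (z - z')) * (sqrt om * norm2 r) / om"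
    using om by (simp add: divide_right_mono)
  also have "(Kg * norm (z - z')) * (sqrt om * norm2 r) / om = (Kg * norm (z - z')) * norm2 r * (sqrt om / om)"
    by simp
  also have "sqrt om / om = 1 / sqrt om" using sqrt_div[OF om] .
  finally have "\<bar>integral\<^sup>L surf (\<lambda>\<theta>. r \<theta> * g (inner z \<theta>) - r \<theta> * g (inner z' \<theta>))\<bar> / om
      \<le> Kg * norm (z - z') * norm2 r / sqrt om" by simp
  then show ?thesis using eqd by (simp add: om_def)
qed

lemma c_mono:
  fixes r r' :: "'a \<Rightarrow> real"
  assumes "continuous_on (sphere 0 1) r" "continuous_on (sphere 0 1) r'"
    "\<forall>\<theta>\<in>sphere 0 1. r' \<theta> \<le> r \<theta>"
  shows "conv r' g z \<le> conv r g z"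
proof -
  have "integral\<^sup>L surf (\<lambda>\<theta>. r' \<theta> * g (inner z \<theta>)) \<le> integral\<^sup>L surf (\<lambda>\<theta>. r \<theta> * g (inner z \<theta>))"
    using assms gnn by (intro imono[OF opos] cprod) (auto intro: mult_right_mono)
  then show ?thesis using opos by (simp add: conv_eq divide_right_mono)
qed

lemma c_low:
  fixes r :: "'a \<Rightarrow> real"
  assumes "continuous_on (sphere 0 1) r" "\<forall>\<theta>\<in>sphere 0 1. a \<le> r \<theta>" "z \<in> sphere 0 1"
  shows "a \<le> conv r g z"
proof -
  have "conv (\<lambda>_. a) g z \<le> conv r g z"
    using assms by (intro c_mono) (auto intro: continuous_intros)
  moreover have "conv (\<lambda>_. a) g z = a * conv (\<lambda>_. 1) g z"
    by (simp add: conv_eq)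
  ultimately show ?thesis using cn assms(3) by simp
qed

end

lemma ll_cont:
  fixes f :: "'a::metric_space \<Rightarrow> 'b::metric_space"
  assumes "locally_lipschitz_on S f"
  shows "continuous_on S f"
  unfolding continuous_on_iff
proof (intro ballI allI impI)
  fix x e assume x: "x \<in> S" and e: "(0::real) < e"
  obtain e0 L where e0: "e0 > 0" and L: "lipschitz_on L (ball x e0 \<inter> S) f"
    using assms x unfolding locally_lipschitz_on_def by blast
  have L0: "0 \<le> L" using L lipschitz_on_nonneg by blast
  define d where "d = min e0 (e / (L + 1))"
  have d: "d > 0" using e0 e L0 by (simp add: d_def)
  show "\<exists>d>0. \<forall>x'\<in>S. dist x' x < d \<longrightarrow> dist (f x') (f x) < e"
  proof (intro exI conjI ballI impI)
    show "d > 0" by (fact d)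
    fix x' assume x': "x' \<in> S" "dist x' x < d"
    have "x' \<in> ball x e0 \<inter> S" "x \<in> ball x e0 \<inter> S" using x' x e0 by (auto simp: d_def dist_commute)
    then have "dist (f x') (f x) \<le> L * dist x' x" using L lipschitz_onD by blast
    also have "\<dots> \<le> L * d" using x' L0 by (intro mult_left_mono) auto
    also have "\<dots> < e"
    proof -
      have "L * d \<le> L * (e / (L + 1))" using L0 by (intro mult_left_mono) (auto simp: d_def)
      also have "\<dots> < e" using L0 e by (simp add: field_simps)
      finally show ?thesis .
    qed
    finally show "dist (f x') (f x) < e" .
  qed
qed

lemma geom:
  fixes \<theta> z :: "'a::real_inner"
  assumes th: "norm \<theta> = 1" and z: "norm z = 1" and a: "0 < a" and rho: "a \<le> \<rho>"
    and s: "0 \<le> s" and sR: "s + d0 \<le> R" and d0: "0 < d0" and L: "0 \<le> L"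
    and lip: "\<bar>\<rho> - R\<bar> \<le> L * norm (\<theta> - z)"
  shows "min (d0 / 2) (min (a / 2) (a * (d0 / (2 * (L + 1))) / 2)) \<le> norm (\<rho> *\<^sub>R \<theta> - s *\<^sub>R z)"
proof -
  define ep where "ep = d0 / (2 * (L + 1))"
  have ep: "0 < ep" using d0 L by (simp add: ep_def)
  have rho0: "0 < \<rho>" using a rho by simp
  have nrm: "\<bar>\<rho> - s\<bar> \<le> norm (\<rho> *\<^sub>R \<theta> - s *\<^sub>R z)"
  proof -
    have "\<bar>norm (\<rho> *\<^sub>R \<theta>) - norm (s *\<^sub>R z)\<bar> \<le> norm (\<rho> *\<^sub>R \<theta> - s *\<^sub>R z)"
      by (rule norm_triangle_ineq3)
    then show ?thesis using th z rho0 s by simp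
  qed
  have sq: "(norm (\<rho> *\<^sub>R \<theta> - s *\<^sub>R z))\<^sup>2 = (\<rho> - s)\<^sup>2 + \<rho> * s * (norm (\<theta> - z))\<^sup>2"
  proof -
    have tt: "inner \<theta> \<theta> = 1" using th by (simp add: power2_norm_eq_inner[symmetric])
    have zz: "inner z z = 1" using z by (simp add: power2_norm_eq_inner[symmetric])
    have f1: "(norm (\<rho> *\<^sub>R \<theta> - s *\<^sub>R z))\<^sup>2 = \<rho>\<^sup>2 * inner \<theta> \<theta> + s\<^sup>2 * inner z z - 2 * \<rho> * s * inner \<theta> z"
      unfolding power2_norm_eq_inner by (simp add: inner_diff_left inner_diff_right inner_commute power2_eq_square algebra_simps)
    have f2: "(norm (\<theta> - z))\<^sup>2 = inner \<theta> \<theta> + inner z z - 2 * inner \<theta> z"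
      unfolding power2_norm_eq_inner by (simp add: inner_diff_left inner_diff_right inner_commute algebra_simps)
    have p: "inner \<theta> z = 1 - (norm (\<theta> - z))\<^sup>2 / 2" using f2 tt zz by linarith
    have e1: "(norm (\<rho> *\<^sub>R \<theta> - s *\<^sub>R z))\<^sup>2 = \<rho>\<^sup>2 + s\<^sup>2 - 2 * \<rho> * s * (1 - (norm (\<theta> - z))\<^sup>2 / 2)"
      using f1 tt zz unfolding p by simp
    have "\<rho>\<^sup>2 + s\<^sup>2 - 2 * \<rho> * s * (1 - (norm (\<theta> - z))\<^sup>2 / 2) = (\<rho> - s)\<^sup>2 + \<rho> * s * (norm (\<theta> - z))\<^sup>2"
      by (simp add: power2_eq_square algebra_simps)
    with e1 show ?thesis by simp
  qed
  show ?thesis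
  proof (cases "norm (\<theta> - z) \<le> ep")
    case True
    have "L * norm (\<theta> - z) \<le> L * ep" using True L by (intro mult_left_mono)
    also have "L * ep \<le> d0 / 2" using L d0 by (simp add: ep_def field_simps)
    finally have "d0 / 2 \<le> \<rho> - s" using lip sR by linarith
    then show ?thesis using nrm by linarith
  next
    case False
    show ?thesis
    proof (cases "s \<le> a / 2")
      case True
      then have "a / 2 \<le> \<bar>\<rho> - s\<bar>" using rho by linarith
      then show ?thesis using nrm by linarith
    next
      case sbig: False
      have "a * (a / 2) * ep\<^sup>2 \<le> \<rho> * s * (norm (\<theta> - z))\<^sup>2"
      proof (rule mult_mono)
        show "ep\<^sup>2 \<le> (norm (\<theta> - z))\<^sup>2" using False ep by (intro power_mono) auto
        show "a * (a / 2) \<le> \<rho> * s" using rho sbig a by (intro mult_mono) auto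
      show "0 \<le> \<rho> * s" using rho0 sbig a by simp
      show "0 \<le> ep\<^sup>2" by simp
      qed
      moreover have "(a * ep / 2)\<^sup>2 \<le> a * (a / 2) * ep\<^sup>2"
      proof -
        have "(a * ep / 2)\<^sup>2 = (a * a * ep\<^sup>2) / 4" by (simp add: power2_eq_square)
        moreover have "a * (a / 2) * ep\<^sup>2 = (a * a * ep\<^sup>2) / 2" by simp
        moreover have "0 \<le> a * a * ep\<^sup>2" by simp
        ultimately show ?thesis by linarith
      qed
      moreover have "0 \<le> (\<rho> - s)\<^sup>2" by simp
      ultimately have "(a * ep / 2)\<^sup>2 \<le> (norm (\<rho> *\<^sub>R \<theta> - s *\<^sub>R z))\<^sup>2"
        unfolding sq by linarith
      then have "a * ep / 2 \<le> norm (\<rho> *\<^sub>R \<theta> - s *\<^sub>R z)"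
        by (rule power2_le_imp_le[OF _ norm_ge_zero])
      then show ?thesis unfolding ep_def by linarith
    qed
  qed
qed

lemma w_props:
  fixes w :: "real \<Rightarrow> real"
  assumes ll: "locally_lipschitz_on {0<..} w" and pos: "\<forall>t>0. 0 < w t" and d: "0 < d"
  shows "\<exists>Lw mw Mw. 0 \<le> Lw \<and> 0 < mw \<and> (\<forall>t\<in>{d..T}. mw \<le> w t \<and> w t \<le> Mw)
     \<and> (\<forall>s\<in>{d..T}. \<forall>t\<in>{d..T}. \<bar>w s - w t\<bar> \<le> Lw * \<bar>s - t\<bar>)"
proof (cases "d \<le> T")
  case False
  then show ?thesis by (intro exI[of _ 0] exI[of _ 1]) auto
next
  case True
  have sub: "{d..T} \<subseteq> {0<..}" using d by auto
  have cw: "continuous_on {d..T} w" using continuous_on_subset[OF ll_cont[OF ll] sub] .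
  obtain t0 where t0: "t0 \<in> {d..T}" "\<forall>t\<in>{d..T}. w t0 \<le> w t"
    using continuous_attains_inf[OF compact_Icc _ cw] True by auto
  obtain t1 where t1: "t1 \<in> {d..T}" "\<forall>t\<in>{d..T}. w t \<le> w t1"
    using continuous_attains_sup[OF compact_Icc _ cw] True by auto
  have "local_lipschitz {0::real} {d..T} (\<lambda>_. w)"
  proof (rule local_lipschitzI)
    fix t x assume "t \<in> {0::real}" "x \<in> {d..T}"
    then have "x \<in> {0<..}" using d by auto
    then obtain e L where e: "e > 0" and L: "lipschitz_on L (ball x e \<inter> {0<..}) w"
      using ll unfolding locally_lipschitz_on_def by blast
    have "cball x (e/2) \<inter> {d..T} \<subseteq> ball x e \<inter> {0<..}" using e d by (auto simp: dist_real_def)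
    then have "L-lipschitz_on (cball x (e/2) \<inter> {d..T}) w" using L lipschitz_on_subset by blast
    then show "\<exists>u>0. \<exists>L. \<forall>t\<in>cball t u \<inter> {0}. L-lipschitz_on (cball x u \<inter> {d..T}) ((\<lambda>_. w) t)"
      using e by (intro exI[of _ "e/2"]) auto
  qed
  then obtain L where L: "\<And>t. t \<in> {0::real} \<Longrightarrow> L-lipschitz_on {d..T} w"
    using local_lipschitz_compact_implies_lipschitz[of "{0::real}" "{d..T}" "\<lambda>_. w"] by auto
  have L': "L-lipschitz_on {d..T} w" using L by auto
  show ?thesis
  proof (intro exI conjI ballI)
    show "0 \<le> L" using lipschitz_on_nonneg[OF L'] .
    show "0 < w t0" using pos t0 d by auto
    fix t assume t: "t \<in> {d..T}"
    show "w t0 \<le> w t" using t0 t by auto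
    show "w t \<le> w t1" using t1 t by auto
  next
    fix s t assume "s \<in> {d..T}" "t \<in> {d..T}"
    then show "\<bar>w s - w t\<bar> \<le> L * \<bar>s - t\<bar>" using lipschitz_onD[OF L'] by (simp add: dist_real_def)
  qed
qed

lemma delta0:
  fixes \<alpha> :: "real \<times> 'a::euclidean_space \<Rightarrow> real"
  assumes ll: "locally_lipschitz_on ({0<..} \<times> sphere 0 1) \<alpha>"
    and bd: "\<forall>l>0. \<forall>z\<in>sphere 0 1. 0 \<le> \<alpha> (l, z) \<and> \<alpha> (l, z) < l" and a: "0 < a"
  shows "\<exists>d0>0. \<forall>l\<in>{a..U}. \<forall>z\<in>sphere (0::'a) 1. d0 \<le> l - \<alpha> (l, z)"
proof (cases "{a..U} \<times> sphere (0::'a) 1 = {}")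
  case True
  then show ?thesis by (intro exI[of _ 1]) auto
next
  case False
  define K where "K = {a..U} \<times> sphere (0::'a) 1"
  have cK: "compact K" unfolding K_def by (intro compact_Times compact_Icc compact_sphere)
  have sub: "K \<subseteq> {0<..} \<times> sphere 0 1" using a by (auto simp: K_def)
  have ca: "continuous_on K \<alpha>" using continuous_on_subset[OF ll_cont[OF ll] sub] .
  have cf: "continuous_on K (\<lambda>p. fst p - \<alpha> p)"
    by (intro continuous_intros ca)
  obtain p0 where p0: "p0 \<in> K" "\<forall>p\<in>K. fst p0 - \<alpha> p0 \<le> fst p - \<alpha> p"
    using continuous_attains_inf[OF cK _ cf] False K_def by auto
  obtain l0 z0 where pz: "p0 = (l0, z0)" by (cases p0)
  have "l0 > 0" "z0 \<in> sphere 0 1" using p0(1) a by (auto simp: K_def pz)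
  then have pos: "0 < fst p0 - \<alpha> p0" using bd pz by auto
  show ?thesis
  proof (intro exI conjI ballI)
    show "0 < fst p0 - \<alpha> p0" by (fact pos)
    fix l z assume "l \<in> {a..U}" "z \<in> sphere (0::'a) 1"
    then have "(l, z) \<in> K" by (simp add: K_def)
    then show "fst p0 - \<alpha> p0 \<le> l - \<alpha> (l, z)" using p0(2) by fastforce
  qed
qed

lemma phi_props:
  fixes \<phi> :: "real \<Rightarrow> real"
  assumes phi_cont: "continuous_on UNIV \<phi>"
    and phi_supp: "\<forall>t. t \<notin> {-1..1} \<longrightarrow> \<phi> t = 0"
    and phi_C3: "C3_on {-1..1} \<phi>"
  shows "\<exists>K\<ge>0. (\<forall>t. \<bar>\<phi> t\<bar> \<le> 2 * K) \<and> (\<forall>s t. \<bar>\<phi> s - \<phi> t\<bar> \<le> K * \<bar>s - t\<bar>)"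
proof -
  obtain f1 f2 where d1: "\<forall>t\<in>{-1..1}. (\<phi> has_real_derivative f1 t) (at t within {-1..1})"
    and d2: "\<forall>t\<in>{-1..1}. (f1 has_real_derivative f2 t) (at t within {-1..1})"
    using phi_C3 unfolding C3_on_def by blast
  have cf1: "continuous_on {-1..1} f1" using d2 by (intro DERIV_continuous_on) auto
  have "compact (f1 ` {-1..1})" by (rule compact_continuous_image[OF cf1 compact_Icc])
  then obtain K0 where K0: "\<forall>y\<in>f1 ` {-1..1}. norm y \<le> K0"
    using compact_imp_bounded bounded_iff by metis
  define K where "K = max K0 0"
  have K: "0 \<le> K" by (simp add: K_def)
  have lipI: "\<bar>\<phi> s - \<phi> t\<bar> \<le> K * \<bar>s - t\<bar>" if "s \<in> {-1..1}" "t \<in> {-1..1}" for s t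
  proof -
    have "norm (\<phi> s - \<phi> t) \<le> K * norm (s - t)"
    proof (rule field_differentiable_bound[of "{-1..1}" \<phi> f1 K])
      show "convex {-1..1::real}" by (rule convex_real_interval)
      show "\<And>z. z \<in> {-1..1} \<Longrightarrow> (\<phi> has_field_derivative f1 z) (at z within {-1..1})" using d1 by auto
      show "\<And>z. z \<in> {-1..1} \<Longrightarrow> norm (f1 z) \<le> K" using K0 by (force simp: K_def)
    qed (use that in auto)
    then show ?thesis by simp
  qed
  have z1: "\<phi> 1 = 0"
  proof -
    have "closed (\<phi> -` {0})" by (rule continuous_closed_vimage[OF closed_singleton]) (metis continuous_on_eq_continuous_at open_UNIV UNIV_I phi_cont)
    moreover have "{1<..} \<subseteq> \<phi> -` {0}" using phi_supp by auto
    ultimately have "closure {1<..} \<subseteq> \<phi> -` {0}" by (rule closure_minimal[rotated])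
    then show ?thesis by auto
  qed
  have z2: "\<phi> (-1) = 0"
  proof -
    have "closed (\<phi> -` {0})" by (rule continuous_closed_vimage[OF closed_singleton]) (metis continuous_on_eq_continuous_at open_UNIV UNIV_I phi_cont)
    moreover have "{..<-1} \<subseteq> \<phi> -` {0}" using phi_supp by auto
    ultimately have "closure {..<-1} \<subseteq> \<phi> -` {0}" by (rule closure_minimal[rotated])
    then show ?thesis by auto
  qed
  define cl where "cl t = max (-1) (min 1 t)" for t :: real
  have clI: "cl t \<in> {-1..1}" for t by (auto simp: cl_def)
  have phcl: "\<phi> t = \<phi> (cl t)" for t
    using phi_supp z1 z2 by (cases "t < -1"; cases "t > 1") (auto simp: cl_def)
  have clL: "\<bar>cl s - cl t\<bar> \<le> \<bar>s - t\<bar>" for s t by (auto simp: cl_def)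
  have lip: "\<bar>\<phi> s - \<phi> t\<bar> \<le> K * \<bar>s - t\<bar>" for s t
  proof -
    have "\<bar>\<phi> s - \<phi> t\<bar> = \<bar>\<phi> (cl s) - \<phi> (cl t)\<bar>" using phcl by metis
    also have "\<dots> \<le> K * \<bar>cl s - cl t\<bar>" using lipI clI by blast
    also have "\<dots> \<le> K * \<bar>s - t\<bar>" using K clL by (rule mult_left_mono[rotated])
    finally show ?thesis .
  qed
  have bnd: "\<bar>\<phi> t\<bar> \<le> 2 * K" for t
  proof -
    have "\<bar>\<phi> t\<bar> = \<bar>\<phi> (cl t) - \<phi> 1\<bar>" using phcl z1 by simp
    also have "\<dots> \<le> K * \<bar>cl t - 1\<bar>" using lipI[of "cl t" 1] clI[of t] by simp
    also have "\<dots> \<le> K * 2" using K clI by (intro mult_left_mono) (auto simp: abs_le_iff)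
    finally show ?thesis by simp
  qed
  show ?thesis using K lip bnd by blast
qed

lemma frac_diff_bound:
  fixes h h' D D' A B H P :: real
  assumes P: "0 < P" "P \<le> D" "P \<le> D'" and hA: "\<bar>h - h'\<bar> \<le> A" and h': "0 \<le> h'" "h' \<le> H"
    and DB: "\<bar>D - D'\<bar> \<le> B"
  shows "\<bar>h / D - h' / D'\<bar> \<le> A / P + H * B / (P * P)"
proof -
  have D0: "0 < D" "0 < D'" using P by auto
  have eq: "h / D - h' / D' = (h - h') / D + h' * (D' - D) / (D * D')"
    using D0 by (simp add: field_simps)
  have t1: "\<bar>(h - h') / D\<bar> \<le> A / P"
  proof -
    have "\<bar>(h - h') / D\<bar> = \<bar>h - h'\<bar> / D" using D0 by simp
    also have "\<dots> \<le> A / P" using hA P by (intro frac_le) auto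
    finally show ?thesis .
  qed
  have t2: "\<bar>h' * (D' - D) / (D * D')\<bar> \<le> H * B / (P * P)"
  proof -
    have "\<bar>h' * (D' - D) / (D * D')\<bar> = h' * \<bar>D - D'\<bar> / (D * D')" using D0 h' by (simp add: abs_mult abs_minus_commute)
    also have "\<dots> \<le> H * B / (P * P)"
    proof (rule frac_le)
      show "0 \<le> H * B" using h' DB by (intro mult_nonneg_nonneg) auto
      show "h' * \<bar>D - D'\<bar> \<le> H * B" using h' DB by (intro mult_mono) auto
      show "0 < P * P" using P by simp
      show "P * P \<le> D * D'" using P by (intro mult_mono) auto
    qed
    finally show ?thesis .
  qed
  have "\<bar>h / D - h' / D'\<bar> \<le> \<bar>(h - h') / D\<bar> + \<bar>h' * (D' - D) / (D * D')\<bar>"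
    unfolding eq by (rule abs_triangle_ineq)
  then show ?thesis using t1 t2 by linarith
qed


lemma sphere_ne: "sphere (0::'a::euclidean_space) 1 \<noteq> {}"
proof -
  obtain b :: 'a where "b \<in> Basis" using nonempty_Basis by blast
  then have "b \<in> sphere 0 1" by simp
  then show ?thesis by blast
qed

lemma bdd_abs:
  fixes f :: "'a::euclidean_space \<Rightarrow> real"
  assumes "continuous_on (sphere 0 1) f"
  shows "bdd_above ((\<lambda>\<theta>. \<bar>f \<theta>\<bar>) ` sphere 0 1)"
proof -
  have "continuous_on (sphere 0 1) (\<lambda>\<theta>. \<bar>f \<theta>\<bar>)" using assms by (intro continuous_intros)
  then have "compact ((\<lambda>\<theta>. \<bar>f \<theta>\<bar>) ` sphere 0 1)" by (rule compact_continuous_image[OF _ compact_sphere])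
  then show ?thesis by (intro bounded_imp_bdd_above compact_imp_bounded)
qed

lemma le_normInf:
  fixes f :: "'a::euclidean_space \<Rightarrow> real"
  assumes "continuous_on (sphere 0 1) f" "\<theta> \<in> sphere 0 1"
  shows "\<bar>f \<theta>\<bar> \<le> normInf f"
  unfolding normInf_def using assms(2) bdd_abs[OF assms(1)] by (rule cSUP_upper)

lemma normInf_le:
  fixes f :: "'a::euclidean_space \<Rightarrow> real"
  assumes "\<forall>\<theta>\<in>sphere 0 1. \<bar>f \<theta>\<bar> \<le> B"
  shows "normInf f \<le> B"
  unfolding normInf_def using sphere_ne assms by (intro cSUP_least) auto

definition SN :: "real \<Rightarrow> real \<Rightarrow> ('a::euclidean_space \<Rightarrow> real) set" where
  "SN a N = {r. continuous_on (sphere 0 1) r \<and> (\<forall>\<theta>\<in>sphere 0 1. a \<le> r \<theta>) \<and> norm2 r \<le> N}"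

definition EN :: "(real \<Rightarrow> real) \<Rightarrow> (real \<times> 'a::euclidean_space \<Rightarrow> real) \<Rightarrow> real \<Rightarrow> real \<Rightarrow> (('a \<Rightarrow> real) \<times> 'a) set" where
  "EN g \<alpha> a N = {(r, x). r \<in> SN a N \<and> (\<exists>r'\<in>SN a N. (\<forall>\<theta>\<in>sphere 0 1. r' \<theta> \<le> r \<theta>) \<and>
         x \<in> (\<lambda>z. \<alpha> (conv r' g z, z) *\<^sub>R z) ` sphere 0 1)}"

context
  fixes g :: "real \<Rightarrow> real" and Gb Kg a :: real and \<alpha> :: "real \<times> 'a::euclidean_space \<Rightarrow> real"
    and w :: "real \<Rightarrow> real"
  assumes opos: "0 < measure (surf::'a measure) (sphere 0 1)"
    and gnn: "\<forall>t. 0 \<le> g t" and gb: "\<forall>t. g t \<le> Gb"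
    and glip: "\<forall>s t. \<bar>g s - g t\<bar> \<le> Kg * \<bar>s - t\<bar>"
    and cn: "\<forall>z\<in>sphere (0::'a) 1. conv (\<lambda>_. 1) g z = 1"
    and a: "0 < a"
    and all: "locally_lipschitz_on ({0<..} \<times> sphere 0 1) \<alpha>"
    and abd: "\<forall>l>0. \<forall>z\<in>sphere 0 1. 0 \<le> \<alpha> (l, z) \<and> \<alpha> (l, z) < l"
    and wll: "locally_lipschitz_on {0<..} w"
    and wpos: "\<forall>t>0. 0 < w t"
begin

lemmas cL2 = c_L2[OF opos gnn gb glip cn]
lemmas cInf = c_Inf[OF opos gnn gb glip cn]
lemmas cLip = c_lip[OF opos gnn gb glip cn]
lemmas cMono = c_mono[OF opos gnn gb glip cn]
lemmas cLow = c_low[OF opos gnn gb glip cn]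
lemmas cDiff = c_diff[OF opos gnn gb glip cn]
lemmas KgNN = Kg_nn[OF opos gnn gb glip cn]
lemmas GbNN = Gb_nn[OF opos gnn gb glip cn]

lemma sq_pos: "0 < sqrt (measure (surf::'a measure) (sphere 0 1))" using opos by simp

lemma r_up:
  fixes r :: "'a \<Rightarrow> real"
  assumes "r \<in> SN a N"
  shows "conv r g z \<le> Gb * N / sqrt (measure (surf::'a measure) (sphere 0 1))"
proof -
  have rc: "continuous_on (sphere 0 1) r" "norm2 r \<le> N" using assms by (auto simp: SN_def)
  have "conv r g z \<le> Gb * norm2 r / sqrt (measure (surf::'a measure) (sphere 0 1))"
    using cL2[OF rc(1), of z] by simp
  also have "\<dots> \<le> Gb * N / sqrt (measure (surf::'a measure) (sphere 0 1))"
    using rc(2) GbNN sq_pos by (intro divide_right_mono mult_left_mono) auto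
  finally show ?thesis .
qed

lemma r_low:
  fixes r :: "'a \<Rightarrow> real"
  assumes "r \<in> SN a N" "z \<in> sphere 0 1"
  shows "a \<le> conv r g z"
  using assms cLow[of r a z] by (auto simp: SN_def)

lemma r_lip:
  fixes r :: "'a \<Rightarrow> real"
  assumes "r \<in> SN a N"
  shows "\<bar>conv r g z - conv r g z'\<bar> \<le> max 0 (Kg * N / sqrt (measure (surf::'a measure) (sphere 0 1))) * norm (z - z')"
proof -
  have rc: "continuous_on (sphere 0 1) r" "norm2 r \<le> N" using assms by (auto simp: SN_def)
  have "\<bar>conv r g z - conv r g z'\<bar> \<le> Kg * norm (z - z') * norm2 r / sqrt (measure (surf::'a measure) (sphere 0 1))"
    by (rule cLip[OF rc(1)])
  also have "\<dots> \<le> Kg * norm (z - z') * N / sqrt (measure (surf::'a measure) (sphere 0 1))"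
    using rc(2) KgNN sq_pos by (intro divide_right_mono mult_left_mono) auto
  also have "\<dots> = (Kg * N / sqrt (measure (surf::'a measure) (sphere 0 1))) * norm (z - z')" by simp
  also have "\<dots> \<le> max 0 (Kg * N / sqrt (measure (surf::'a measure) (sphere 0 1))) * norm (z - z')"
    by (intro mult_right_mono) auto
  finally show ?thesis .
qed

lemma conv_cont:
  fixes r :: "'a \<Rightarrow> real"
  assumes rc: "continuous_on (sphere 0 1) r"
  shows "continuous_on S (conv r g)"
proof -
  define C where "C = Kg * norm2 r / sqrt (measure (surf::'a measure) (sphere 0 1))"
  have C: "0 \<le> C" unfolding C_def using KgNN sq_pos by (simp add: norm2_def)
  have "C-lipschitz_on UNIV (conv r g)"
  proof (rule lipschitz_onI[OF _ C])
    fix z z' :: 'a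
    have "\<bar>conv r g z - conv r g z'\<bar> \<le> Kg * norm (z - z') * norm2 r / sqrt (measure (surf::'a measure) (sphere 0 1))"
      by (rule cLip[OF rc])
    also have "\<dots> = C * dist z z'" by (simp add: C_def dist_norm)
    finally show "dist (conv r g z) (conv r g z') \<le> C * dist z z'" by (simp add: dist_real_def)
  qed
  then have "continuous_on UNIV (conv r g)" by (rule lipschitz_on_continuous_on)
  then show ?thesis by (rule continuous_on_subset) auto
qed

lemma dist_bounds:
  "\<exists>\<delta>>0. \<forall>r x. (r, x) \<in> EN g \<alpha> a N \<longrightarrow> (\<forall>\<theta>\<in>sphere 0 1. \<delta> \<le> norm (conv r g \<theta> *\<^sub>R \<theta> - x)
      \<and> norm (conv r g \<theta> *\<^sub>R \<theta> - x) \<le> 2 * (Gb * N / sqrt (measure (surf::'a measure) (sphere 0 1))))"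
proof -
  define U where "U = Gb * N / sqrt (measure (surf::'a measure) (sphere 0 1))"
  define L where "L = max 0 (Kg * N / sqrt (measure (surf::'a measure) (sphere 0 1)))"
  obtain d0 where d0: "d0 > 0" "\<forall>l\<in>{a..U}. \<forall>z\<in>sphere (0::'a) 1. d0 \<le> l - \<alpha> (l, z)"
    using delta0[OF all abd a, of U] by blast
  define \<delta> where "\<delta> = min (d0 / 2) (min (a / 2) (a * (d0 / (2 * (L + 1))) / 2))"
  have L0: "0 \<le> L" by (simp add: L_def)
  have dpos: "0 < \<delta>" using d0 a L0 by (simp add: \<delta>_def)
  show ?thesis
  proof (intro exI conjI allI impI ballI)
    show "0 < \<delta>" by (fact dpos)
    fix r x \<theta> assume rx: "(r, x) \<in> EN g \<alpha> a N" and th: "\<theta> \<in> sphere (0::'a) 1"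
    from rx obtain r' z where r: "r \<in> SN a N" and r': "r' \<in> SN a N" and le: "\<forall>\<theta>\<in>sphere 0 1. r' \<theta> \<le> r \<theta>"
      and z: "z \<in> sphere 0 1" and xe: "x = \<alpha> (conv r' g z, z) *\<^sub>R z"
      unfolding EN_def by blast
    define l where "l = conv r' g z"
    define s where "s = \<alpha> (l, z)"
    have l: "l \<in> {a..U}" using r_low[OF r' z] r_up[OF r', of z] by (simp add: l_def U_def)
    have la: "0 < l" using l a by simp
    have s: "0 \<le> s" "s < l" using abd la z by (auto simp: s_def)
    have sd: "s + d0 \<le> l" using d0(2) l z by (fastforce simp: s_def)
    have lR: "l \<le> conv r g z" unfolding l_def
      using r r' le by (intro cMono) (auto simp: SN_def)
    have rho: "a \<le> conv r g \<theta>" by (rule r_low[OF r th])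
    have lip: "\<bar>conv r g \<theta> - conv r g z\<bar> \<le> L * norm (\<theta> - z)"
      using r_lip[OF r, of \<theta> z] by (simp add: L_def)
    have "\<delta> \<le> norm (conv r g \<theta> *\<^sub>R \<theta> - s *\<^sub>R z)" unfolding \<delta>_def
    proof (rule geom)
      show "norm \<theta> = 1" "norm z = 1" using th z by auto
      show "s + d0 \<le> conv r g z" using sd lR by linarith
    qed (use a rho s d0 L0 lip in auto)
    then show "\<delta> \<le> norm (conv r g \<theta> *\<^sub>R \<theta> - x)" by (simp add: xe s_def l_def)
    have "norm (conv r g \<theta> *\<^sub>R \<theta> - s *\<^sub>R z) \<le> norm (conv r g \<theta> *\<^sub>R \<theta>) + norm (s *\<^sub>R z)"
      by (rule norm_triangle_ineq4)
    also have "\<dots> = conv r g \<theta> + s" using th z rho a s by simp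
    also have "\<dots> \<le> U + U" using r_up[OF r, of \<theta>] s l unfolding U_def by simp
    finally show "norm (conv r g \<theta> *\<^sub>R \<theta> - x) \<le> 2 * (Gb * N / sqrt (measure (surf::'a measure) (sphere 0 1)))"
      by (simp add: xe s_def l_def U_def)
  qed
qed

lemma F_main:
  "\<exists>K M0 m M. 0 < m \<and> 0 \<le> M0 \<and> 0 \<le> K \<and>
    (\<forall>r x. (r, x) \<in> EN g \<alpha> a N \<longrightarrow> (\<forall>\<theta>\<in>sphere 0 1. m \<le> Fw g w r x \<theta> \<and> Fw g w r x \<theta> \<le> M)
        \<and> M0-lipschitz_on (sphere 0 1) (Fw g w r x)) \<and>
    (\<forall>r x r' x' E0. (r, x) \<in> EN g \<alpha> a N \<longrightarrow> (r', x') \<in> EN g \<alpha> a N \<longrightarrow>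
        (\<forall>\<theta>\<in>sphere 0 1. \<bar>conv r g \<theta> - conv r' g \<theta>\<bar> \<le> E0) \<longrightarrow>
        (\<forall>\<theta>\<in>sphere 0 1. \<bar>Fw g w r x \<theta> - Fw g w r' x' \<theta>\<bar> \<le> K * (E0 + dist x x')))"
proof -
  define om where "om = measure (surf::'a measure) (sphere 0 1)"
  have om: "0 < om" using opos by (simp add: om_def)
  obtain \<delta> where \<delta>: "\<delta> > 0" and db: "\<forall>r x. (r, x) \<in> EN g \<alpha> a N \<longrightarrow> (\<forall>\<theta>\<in>sphere 0 1. \<delta> \<le> norm (conv r g \<theta> *\<^sub>R \<theta> - x)
      \<and> norm (conv r g \<theta> *\<^sub>R \<theta> - x) \<le> 2 * (Gb * N / sqrt om))"
    using dist_bounds[of N] unfolding om_def by blast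
  define T where "T = 2 * (Gb * N / sqrt om)"
  define U where "U = max 0 (Gb * N / sqrt om)"
  define L where "L = max 0 (Kg * N / sqrt om)"
  obtain Lw mw Mw where Lw: "0 \<le> Lw" and mw: "0 < mw" and wb: "\<forall>t\<in>{\<delta>..T}. mw \<le> w t \<and> w t \<le> Mw"
    and wl: "\<forall>s\<in>{\<delta>..T}. \<forall>t\<in>{\<delta>..T}. \<bar>w s - w t\<bar> \<le> Lw * \<bar>s - t\<bar>"
    using w_props[OF wll wpos \<delta>, of T] by blast
  define Mx where "Mx = max Mw mw"
  have Mx: "0 < Mx" using mw by (simp add: Mx_def)
  have nr: "norm (conv r g \<theta> *\<^sub>R \<theta> - x) \<in> {\<delta>..T}" if "(r, x) \<in> EN g \<alpha> a N" "\<theta> \<in> sphere 0 1" for r x \<theta>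
    using db that by (auto simp: T_def)
  have hb: "mw \<le> w (norm (conv r g \<theta> *\<^sub>R \<theta> - x)) \<and> w (norm (conv r g \<theta> *\<^sub>R \<theta> - x)) \<le> Mx"
    if "(r, x) \<in> EN g \<alpha> a N" "\<theta> \<in> sphere 0 1" for r x \<theta>
  proof -
    have "mw \<le> w (norm (conv r g \<theta> *\<^sub>R \<theta> - x)) \<and> w (norm (conv r g \<theta> *\<^sub>R \<theta> - x)) \<le> Mw"
      using wb nr[OF that] by blast
    then show ?thesis by (auto simp: Mx_def)
  qed
  have rc: "continuous_on (sphere 0 1) r" if "(r, x) \<in> EN g \<alpha> a N" for r x
    using that by (auto simp: EN_def SN_def)
  have hc: "continuous_on (sphere 0 1) (\<lambda>\<theta>. w (norm (conv r g \<theta> *\<^sub>R \<theta> - x)))"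
    if rx: "(r, x) \<in> EN g \<alpha> a N" for r x
  proof -
    have c1: "continuous_on (sphere 0 1) (\<lambda>\<theta>. norm (conv r g \<theta> *\<^sub>R \<theta> - x))"
      using conv_cont[OF rc[OF rx], of "sphere 0 1"] by (intro continuous_intros) auto
    have sub: "(\<lambda>\<theta>. norm (conv r g \<theta> *\<^sub>R \<theta> - x)) ` sphere 0 1 \<subseteq> {0<..}"
      using nr[OF rx] \<delta> by fastforce
    show ?thesis using continuous_on_compose2[OF ll_cont[OF wll] c1 sub] .
  qed
  have Db: "mw * om \<le> (LINT z|surf. w (norm (conv r g z *\<^sub>R z - x)))
       \<and> (LINT z|surf. w (norm (conv r g z *\<^sub>R z - x))) \<le> Mx * om"
    if rx: "(r, x) \<in> EN g \<alpha> a N" for r x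
    using ilower[OF opos hc[OF rx], of mw] iupper[OF opos hc[OF rx], of Mx] hb[OF rx]
    by (simp add: om_def)
  have cU: "\<bar>conv r g \<theta>\<bar> \<le> U" if rx: "(r, x) \<in> EN g \<alpha> a N" and th: "\<theta> \<in> sphere 0 1" for r x \<theta>
  proof -
    have r: "r \<in> SN a N" using rx by (auto simp: EN_def)
    have "a \<le> conv r g \<theta>" by (rule r_low[OF r th])
    moreover have "conv r g \<theta> \<le> Gb * N / sqrt om" using r_up[OF r, of \<theta>] by (simp add: om_def)
    ultimately show ?thesis using a by (simp add: U_def)
  qed
  have cL: "\<bar>conv r g \<theta> - conv r g \<theta>'\<bar> \<le> L * norm (\<theta> - \<theta>')" if rx: "(r, x) \<in> EN g \<alpha> a N" for r x \<theta> \<theta>'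
  proof -
    have r: "r \<in> SN a N" using rx by (auto simp: EN_def)
    show ?thesis using r_lip[OF r, of \<theta> \<theta>'] by (simp add: L_def om_def)
  qed
  have U0: "0 \<le> U" "0 \<le> L" by (auto simp: U_def L_def)
  define m where "m = mw / (Mx * om)"
  define M where "M = Mx / (mw * om)"
  define M0 where "M0 = Lw * (L + U) / (mw * om)"
  define K where "K = Lw / (mw * om) + Mx * Lw / (mw * mw * om)"
  have m: "0 < m" using mw Mx om by (simp add: m_def)
  have M0: "0 \<le> M0" using Lw U0 mw om by (simp add: M0_def)
  have K: "0 \<le> K" using Lw Mx mw om by (simp add: K_def)
  have P1: "(\<forall>\<theta>\<in>sphere 0 1. m \<le> Fw g w r x \<theta> \<and> Fw g w r x \<theta> \<le> M) \<and> M0-lipschitz_on (sphere 0 1) (Fw g w r x)"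
    if rx: "(r, x) \<in> EN g \<alpha> a N" for r x
  proof -
    define D where "D = (LINT z|surf. w (norm (conv r g z *\<^sub>R z - x)))"
    have D: "mw * om \<le> D" "D \<le> Mx * om" using Db[OF rx] by (auto simp: D_def)
    have D0: "0 < D" using D(1) mw om by (meson mult_pos_pos order_less_le_trans)
    have Fe: "Fw g w r x \<theta> = w (norm (conv r g \<theta> *\<^sub>R \<theta> - x)) / D" for \<theta>
      by (simp add: Fw_def D_def)
    have B: "\<forall>\<theta>\<in>sphere 0 1. m \<le> Fw g w r x \<theta> \<and> Fw g w r x \<theta> \<le> M"
    proof
      fix \<theta> :: 'a assume th: "\<theta> \<in> sphere 0 1"
      have h: "mw \<le> w (norm (conv r g \<theta> *\<^sub>R \<theta> - x))" "w (norm (conv r g \<theta> *\<^sub>R \<theta> - x)) \<le> Mx"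
        using hb[OF rx th] by auto
      have "m \<le> w (norm (conv r g \<theta> *\<^sub>R \<theta> - x)) / D" unfolding m_def
        using h mw D D0 by (intro frac_le) auto
      moreover have "w (norm (conv r g \<theta> *\<^sub>R \<theta> - x)) / D \<le> M" unfolding M_def
        using h mw om Mx D by (intro frac_le) auto
      ultimately show "m \<le> Fw g w r x \<theta> \<and> Fw g w r x \<theta> \<le> M" by (simp add: Fe)
    qed
    have Li: "M0-lipschitz_on (sphere 0 1) (Fw g w r x)"
    proof (rule lipschitz_onI[OF _ M0])
      fix \<theta> \<theta>' :: 'a assume th: "\<theta> \<in> sphere 0 1" and th': "\<theta>' \<in> sphere 0 1"
      define c where "c = conv r g \<theta>"
      define c' where "c' = conv r g \<theta>'"
      have e1: "c *\<^sub>R \<theta> - c' *\<^sub>R \<theta>' = (c - c') *\<^sub>R \<theta> + c' *\<^sub>R (\<theta> - \<theta>')"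
        by (simp add: algebra_simps)
      have "norm (c *\<^sub>R \<theta> - c' *\<^sub>R \<theta>') \<le> norm ((c - c') *\<^sub>R \<theta>) + norm (c' *\<^sub>R (\<theta> - \<theta>'))"
        unfolding e1 by (rule norm_triangle_ineq)
      also have "\<dots> = \<bar>c - c'\<bar> + \<bar>c'\<bar> * norm (\<theta> - \<theta>')" using th by simp
      also have "\<dots> \<le> L * norm (\<theta> - \<theta>') + U * norm (\<theta> - \<theta>')"
        using cL[OF rx, of \<theta> \<theta>'] cU[OF rx th'] unfolding c_def c'_def
        by (intro add_mono mult_right_mono) auto
      finally have n1: "norm (c *\<^sub>R \<theta> - c' *\<^sub>R \<theta>') \<le> (L + U) * dist \<theta> \<theta>'"
        by (simp add: dist_norm algebra_simps)
      have "\<bar>norm (c *\<^sub>R \<theta> - x) - norm (c' *\<^sub>R \<theta>' - x)\<bar> \<le> norm ((c *\<^sub>R \<theta> - x) - (c' *\<^sub>R \<theta>' - x))"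
        by (rule norm_triangle_ineq3)
      also have "\<dots> = norm (c *\<^sub>R \<theta> - c' *\<^sub>R \<theta>')" by simp
      finally have n2: "\<bar>norm (c *\<^sub>R \<theta> - x) - norm (c' *\<^sub>R \<theta>' - x)\<bar> \<le> (L + U) * dist \<theta> \<theta>'" using n1 by linarith
      have "\<bar>w (norm (c *\<^sub>R \<theta> - x)) - w (norm (c' *\<^sub>R \<theta>' - x))\<bar> \<le> Lw * \<bar>norm (c *\<^sub>R \<theta> - x) - norm (c' *\<^sub>R \<theta>' - x)\<bar>"
        using wl nr[OF rx th] nr[OF rx th'] unfolding c_def c'_def by blast
      also have "\<dots> \<le> Lw * ((L + U) * dist \<theta> \<theta>')" using n2 Lw by (rule mult_left_mono)
      finally have n3: "\<bar>w (norm (c *\<^sub>R \<theta> - x)) - w (norm (c' *\<^sub>R \<theta>' - x))\<bar> \<le> Lw * ((L + U) * dist \<theta> \<theta>')" .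
      have "dist (Fw g w r x \<theta>) (Fw g w r x \<theta>') = \<bar>w (norm (c *\<^sub>R \<theta> - x)) - w (norm (c' *\<^sub>R \<theta>' - x))\<bar> / D"
        using D0 by (simp add: Fe dist_real_def c_def c'_def diff_divide_distrib[symmetric])
      also have "\<dots> \<le> Lw * ((L + U) * dist \<theta> \<theta>') / (mw * om)"
      proof (rule frac_le)
        show "0 \<le> Lw * ((L + U) * dist \<theta> \<theta>')" using Lw U0 by simp
        show "0 < mw * om" using mw om by simp
        show "mw * om \<le> D" by (rule D(1))
      qed (rule n3)
      also have "\<dots> = M0 * dist \<theta> \<theta>'" by (simp add: M0_def)
      finally show "dist (Fw g w r x \<theta>) (Fw g w r x \<theta>') \<le> M0 * dist \<theta> \<theta>'" .
    qed
    show ?thesis using B Li by blast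
  qed
  have P2: "\<forall>\<theta>\<in>sphere 0 1. \<bar>Fw g w r x \<theta> - Fw g w r' x' \<theta>\<bar> \<le> K * (E0 + dist x x')"
    if rx: "(r, x) \<in> EN g \<alpha> a N" and rx': "(r', x') \<in> EN g \<alpha> a N"
      and E0: "\<forall>\<theta>\<in>sphere 0 1. \<bar>conv r g \<theta> - conv r' g \<theta>\<bar> \<le> E0" for r x r' x' E0
  proof
    fix \<theta> :: 'a assume th: "\<theta> \<in> sphere 0 1"
    define Q where "Q = E0 + dist x x'"
    have "\<bar>conv r g \<theta> - conv r' g \<theta>\<bar> \<le> E0" using E0 th by blast
    then have "0 \<le> E0" by (rule order_trans[OF abs_ge_zero])
    then have Q: "0 \<le> Q" by (simp add: Q_def)
    define h where "h \<phi> = w (norm (conv r g \<phi> *\<^sub>R \<phi> - x))" for \<phi>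
    define h' where "h' \<phi> = w (norm (conv r' g \<phi> *\<^sub>R \<phi> - x'))" for \<phi>
    define D where "D = (LINT z|surf. w (norm (conv r g z *\<^sub>R z - x)))"
    define D' where "D' = (LINT z|surf. w (norm (conv r' g z *\<^sub>R z - x')))"
    have hh: "\<bar>h \<phi> - h' \<phi>\<bar> \<le> Lw * Q" if ph: "\<phi> \<in> sphere 0 1" for \<phi>
    proof -
      have e1: "(conv r g \<phi> *\<^sub>R \<phi> - x) - (conv r' g \<phi> *\<^sub>R \<phi> - x') = (conv r g \<phi> - conv r' g \<phi>) *\<^sub>R \<phi> - (x - x')"
        by (simp add: algebra_simps)
      have "\<bar>norm (conv r g \<phi> *\<^sub>R \<phi> - x) - norm (conv r' g \<phi> *\<^sub>R \<phi> - x')\<bar>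
          \<le> norm ((conv r g \<phi> *\<^sub>R \<phi> - x) - (conv r' g \<phi> *\<^sub>R \<phi> - x'))"
        by (rule norm_triangle_ineq3)
      also have "\<dots> \<le> norm ((conv r g \<phi> - conv r' g \<phi>) *\<^sub>R \<phi>) + norm (x - x')"
        unfolding e1 by (rule norm_triangle_ineq4)
      also have "\<dots> \<le> Q" using E0 ph by (simp add: Q_def dist_norm)
      finally have n: "\<bar>norm (conv r g \<phi> *\<^sub>R \<phi> - x) - norm (conv r' g \<phi> *\<^sub>R \<phi> - x')\<bar> \<le> Q" .
      have "\<bar>h \<phi> - h' \<phi>\<bar> \<le> Lw * \<bar>norm (conv r g \<phi> *\<^sub>R \<phi> - x) - norm (conv r' g \<phi> *\<^sub>R \<phi> - x')\<bar>"
        using wl nr[OF rx ph] nr[OF rx' ph] unfolding h_def h'_def by blast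
      also have "\<dots> \<le> Lw * Q" using n Lw by (rule mult_left_mono)
      finally show ?thesis .
    qed
    have DD: "\<bar>D - D'\<bar> \<le> Lw * Q * om"
    proof -
      have "D - D' = (LINT z|surf. h z - h' z)"
        unfolding D_def D'_def h_def h'_def by (rule idiff[OF opos hc[OF rx] hc[OF rx'], symmetric])
      moreover have "\<bar>LINT z|surf. h z - h' z\<bar> \<le> Lw * Q * om"
        using ibound[OF opos, of "\<lambda>z. h z - h' z" "Lw * Q"] hh by (simp add: om_def)
      ultimately show ?thesis by simp
    qed
    have "\<bar>h \<theta> / D - h' \<theta> / D'\<bar> \<le> (Lw * Q) / (mw * om) + Mx * (Lw * Q * om) / ((mw * om) * (mw * om))"
    proof (rule frac_diff_bound)
      show "0 < mw * om" using mw om by simp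
      show "mw * om \<le> D" "mw * om \<le> D'" using Db[OF rx] Db[OF rx'] by (auto simp: D_def D'_def)
      show "\<bar>h \<theta> - h' \<theta>\<bar> \<le> Lw * Q" by (rule hh[OF th])
      show "0 \<le> h' \<theta>" "h' \<theta> \<le> Mx" using hb[OF rx' th] mw by (auto simp: h'_def)
      show "\<bar>D - D'\<bar> \<le> Lw * Q * om" by (rule DD)
    qed
    also have "(Lw * Q) / (mw * om) + Mx * (Lw * Q * om) / ((mw * om) * (mw * om)) = K * Q"
      using mw om by (simp add: K_def field_simps)
    finally show "\<bar>Fw g w r x \<theta> - Fw g w r' x' \<theta>\<bar> \<le> K * (E0 + dist x x')"
      by (simp add: Fw_def h_def h'_def D_def D'_def Q_def)
  qed
  show ?thesis
    apply (rule exI[of _ K], rule exI[of _ M0], rule exI[of _ m], rule exI[of _ M])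
    using m M0 K P1 P2 by blast
qed

end

theorem proposition4p10:
  fixes \<eta>0 c a :: real and \<phi> w g :: "real \<Rightarrow> real"
    and \<alpha> :: "real \<times> 'a::euclidean_space \<Rightarrow> real"
  assumes dim: "DIM('a) \<ge> 2"
    and eta: "0 < \<eta>0" "\<eta>0 < 1"
    and phi_nonneg: "\<forall>t. 0 \<le> \<phi> t"
    and phi_cont: "continuous_on UNIV \<phi>"
    and phi_supp: "\<forall>t. t \<notin> {-1..1} \<longrightarrow> \<phi> t = 0"
    and phi_C3: "C3_on {-1..1} \<phi>"
    and phi_norm: "(SUP t. \<bar>\<phi> t\<bar>) = 1"
    and g_def: "g = (\<lambda>t. c / omega (DIM('a) - 1) * \<eta>0 powr (- (real DIM('a) - 1))
                        * \<phi> (1 - (1 - t) / \<eta>0\<^sup>2))"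
    and c_norm: "\<forall>z\<in>sphere (0::'a) 1. conv (\<lambda>_. 1) g z = 1"
    and alpha_lip: "locally_lipschitz_on ({0<..} \<times> sphere 0 1) \<alpha>"
    and alpha_bd: "\<forall>l>0. \<forall>z\<in>sphere 0 1. 0 \<le> \<alpha> (l, z) \<and> \<alpha> (l, z) < l"
    and w_lip: "locally_lipschitz_on {0<..} w"
    and w_pos: "\<forall>t>0. 0 < w t"
    and a: "0 < a" "a < 1"
  shows
    "(\<exists>L. \<forall>(r, x)\<in>Aeset g \<alpha> normInf a. \<forall>(r', x')\<in>Aeset g \<alpha> normInf a.
        norm2 (\<lambda>\<theta>. Fw g w r x \<theta> - Fw g w r' x' \<theta>) \<le> L * (norm2 (\<lambda>\<theta>. r \<theta> - r' \<theta>) + dist x x'))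
   \<and> (\<exists>L. \<forall>(r, x)\<in>Aeset g \<alpha> normInf a. \<forall>(r', x')\<in>Aeset g \<alpha> normInf a.
        normInf (\<lambda>\<theta>. Fw g w r x \<theta> - Fw g w r' x' \<theta>) \<le> L * (normInf (\<lambda>\<theta>. r \<theta> - r' \<theta>) + dist x x'))
   \<and> (\<exists>M. \<forall>(r, x)\<in>Aeset g \<alpha> normInf a. lipschitz_on M (sphere 0 1) (Fw g w r x))
   \<and> (\<exists>m M. 0 < m \<and> (\<forall>(r, x)\<in>Aeset g \<alpha> norm2 a. \<forall>\<theta>\<in>sphere 0 1.
        m \<le> Fw g w r x \<theta> \<and> Fw g w r x \<theta> \<le> M))"
proof -
  define om where "om = measure (surf::'a measure) (sphere 0 1)"
  obtain z0 :: 'a where z0: "z0 \<in> sphere 0 1" using sphere_ne by blast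
  define Kc where "Kc = c / omega (DIM('a) - 1) * \<eta>0 powr (- (real DIM('a) - 1))"
  have gK: "g t = Kc * \<phi> (1 - (1 - t) / \<eta>0\<^sup>2)" for t by (simp add: g_def Kc_def)
  obtain K where K: "0 \<le> K" "\<forall>t. \<bar>\<phi> t\<bar> \<le> 2 * K" "\<forall>s t. \<bar>\<phi> s - \<phi> t\<bar> \<le> K * \<bar>s - t\<bar>"
    using phi_props[OF phi_cont phi_supp phi_C3] by blast
  have c1: "conv (\<lambda>_. 1) g z0 = 1" using c_norm z0 by blast
  have om_ne: "om \<noteq> 0"
  proof
    assume "om = 0"
    then have "conv (\<lambda>_. 1) g z0 = 0" by (simp add: conv_def om_def)
    then show False using c1 by simp
  qed
  have opos: "0 < om" using om_ne by (simp add: om_def order_less_le)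
  have Kc: "0 \<le> Kc"
  proof (rule ccontr)
    assume "\<not> 0 \<le> Kc"
    then have gneg: "g t \<le> 0" for t using phi_nonneg gK by (simp add: mult_nonpos_nonneg)
    have "0 \<le> (LINT \<theta>|surf. - (1 * g (inner z0 \<theta>)))" by (rule Bochner_Integration.integral_nonneg) (simp add: gneg)
    then have "(LINT \<theta>|surf. 1 * g (inner z0 \<theta>)) \<le> 0" by simp
    then have "conv (\<lambda>_. 1) g z0 \<le> 0" unfolding conv_def using opos om_def
      by (simp add: divide_nonpos_pos)
    then show False using c1 by simp
  qed
  define Gb where "Gb = Kc * (2 * K)"
  define Kg where "Kg = Kc * K / \<eta>0\<^sup>2"
  have gnn: "\<forall>t. 0 \<le> g t" using gK Kc phi_nonneg by simp
  have gb: "\<forall>t. g t \<le> Gb"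
  proof
    fix t
    have "\<phi> (1 - (1 - t) / \<eta>0\<^sup>2) \<le> 2 * K" using K(2) by (meson abs_le_D1)
    then show "g t \<le> Gb" unfolding gK Gb_def using Kc by (rule mult_left_mono)
  qed
  have glip: "\<forall>s t. \<bar>g s - g t\<bar> \<le> Kg * \<bar>s - t\<bar>"
  proof (intro allI)
    fix s t
    have e: "(1 - (1 - s) / \<eta>0\<^sup>2) - (1 - (1 - t) / \<eta>0\<^sup>2) = (s - t) / \<eta>0\<^sup>2"
      by (simp add: diff_divide_distrib[symmetric])
    have "\<bar>g s - g t\<bar> = Kc * \<bar>\<phi> (1 - (1 - s) / \<eta>0\<^sup>2) - \<phi> (1 - (1 - t) / \<eta>0\<^sup>2)\<bar>"
      unfolding gK using Kc by (simp add: right_diff_distrib[symmetric] abs_mult)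
    also have "\<dots> \<le> Kc * (K * \<bar>(1 - (1 - s) / \<eta>0\<^sup>2) - (1 - (1 - t) / \<eta>0\<^sup>2)\<bar>)"
      using Kc by (rule mult_left_mono[OF K(3)[rule_format]])
    also have "\<dots> = Kg * \<bar>s - t\<bar>" unfolding e Kg_def using eta by (simp add: abs_div)
    finally show "\<bar>g s - g t\<bar> \<le> Kg * \<bar>s - t\<bar>" .
  qed
  have opos': "0 < measure (surf::'a measure) (sphere 0 1)" using opos by (simp add: om_def)
  note FM = F_main[OF opos' gnn gb glip c_norm a(1) alpha_lip alpha_bd w_lip w_pos]
  note cL2 = c_L2[OF opos' gnn gb glip c_norm]
  note cInf = c_Inf[OF opos' gnn gb glip c_norm]
  note cDiff = c_diff[OF opos' gnn gb glip c_norm]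
  have GbNN: "0 \<le> Gb" using Gb_nn[OF opos' gnn gb glip c_norm] .
  define N1 where "N1 = sqrt om / a"
  have AinS: "r \<in> SN a N1" if r: "r \<in> Aset normInf a" for r :: "'a \<Rightarrow> real"
  proof -
    have rc: "continuous_on (sphere 0 1) r" and ra: "\<forall>\<theta>\<in>sphere 0 1. a \<le> r \<theta>" and rn: "normInf r \<le> 1 / a"
      using r by (auto simp: Aset_def Cplus_def)
    have "\<forall>\<theta>\<in>sphere 0 1. \<bar>(r \<theta>)\<^sup>2\<bar> \<le> (1 / a)\<^sup>2"
    proof
      fix \<theta> :: 'a assume th: "\<theta> \<in> sphere 0 1"
      have "\<bar>r \<theta>\<bar> \<le> 1 / a" using le_normInf[OF rc th] rn by linarith
      then have "\<bar>r \<theta>\<bar>\<^sup>2 \<le> (1 / a)\<^sup>2" by (rule power_mono) simp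
      then show "\<bar>(r \<theta>)\<^sup>2\<bar> \<le> (1 / a)\<^sup>2" by simp
    qed
    from ibound[OF opos' this] have "(LINT \<theta>|surf. (r \<theta>)\<^sup>2) \<le> (1 / a)\<^sup>2 * om" by (simp add: om_def)
    then have "norm2 r \<le> sqrt ((1 / a)\<^sup>2 * om)" unfolding norm2_def by (rule real_sqrt_le_mono)
    also have "\<dots> = N1" using a by (simp add: N1_def real_sqrt_mult)
    finally show ?thesis using rc ra by (simp add: SN_def)
  qed
  have A2inS: "r \<in> SN a (1 / a)" if r: "r \<in> Aset norm2 a" for r :: "'a \<Rightarrow> real"
    using r by (auto simp: Aset_def Cplus_def SN_def)
  have AeI: "(r, x) \<in> EN g \<alpha> a N1" if "(r, x) \<in> Aeset g \<alpha> normInf a" for r x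
    using that AinS unfolding Aeset_def EN_def by blast
  have Ae2I: "(r, x) \<in> EN g \<alpha> a (1 / a)" if "(r, x) \<in> Aeset g \<alpha> norm2 a" for r x
    using that A2inS unfolding Aeset_def EN_def by blast
  have rcA: "continuous_on (sphere 0 1) r" if "(r, x) \<in> Aeset g \<alpha> N a" for r x N
    using that by (auto simp: Aeset_def Aset_def Cplus_def)
  obtain K1 M0 where K1: "0 \<le> K1" and M0: "0 \<le> M0"
    and lipF: "\<forall>r x. (r, x) \<in> EN g \<alpha> a N1 \<longrightarrow> M0-lipschitz_on (sphere 0 1) (Fw g w r x)"
    and dF: "\<forall>r x r' x' E0. (r, x) \<in> EN g \<alpha> a N1 \<longrightarrow> (r', x') \<in> EN g \<alpha> a N1 \<longrightarrow>
        (\<forall>\<theta>\<in>sphere 0 1. \<bar>conv r g \<theta> - conv r' g \<theta>\<bar> \<le> E0) \<longrightarrow>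
        (\<forall>\<theta>\<in>sphere 0 1. \<bar>Fw g w r x \<theta> - Fw g w r' x' \<theta>\<bar> \<le> K1 * (E0 + dist x x'))"
    using FM[of N1] by blast
  obtain m M where m: "0 < m"
    and bF: "\<forall>r x. (r, x) \<in> EN g \<alpha> a (1 / a) \<longrightarrow> (\<forall>\<theta>\<in>sphere 0 1. m \<le> Fw g w r x \<theta> \<and> Fw g w r x \<theta> \<le> M)"
    using FM[of "1 / a"] by blast
  have sq: "0 < sqrt om" using opos by simp
  have P1: "norm2 (\<lambda>\<theta>. Fw g w r x \<theta> - Fw g w r' x' \<theta>) \<le> (K1 * Gb + K1 * sqrt om) * (norm2 (\<lambda>\<theta>. r \<theta> - r' \<theta>) + dist x x')"
    if rx: "(r, x) \<in> Aeset g \<alpha> normInf a" and rx': "(r', x') \<in> Aeset g \<alpha> normInf a" for r x r' x'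
  proof -
    have rc: "continuous_on (sphere 0 1) r" "continuous_on (sphere 0 1) r'" using rcA rx rx' by blast+
    have dc: "continuous_on (sphere 0 1) (\<lambda>\<theta>. r \<theta> - r' \<theta>)" using rc by (intro continuous_intros)
    define n where "n = norm2 (\<lambda>\<theta>. r \<theta> - r' \<theta>)"
    define E0 where "E0 = Gb * n / sqrt om"
    have n0: "0 \<le> n" by (simp add: n_def norm2_def)
    have E: "\<forall>\<theta>\<in>sphere 0 1. \<bar>conv r g \<theta> - conv r' g \<theta>\<bar> \<le> E0"
      using cDiff[OF rc] cL2[OF dc] by (simp add: E0_def n_def om_def)
    have pw: "\<forall>\<theta>\<in>sphere 0 1. \<bar>Fw g w r x \<theta> - Fw g w r' x' \<theta>\<bar> \<le> K1 * (E0 + dist x x')"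
      using dF AeI[OF rx] AeI[OF rx'] E by blast
    define B where "B = K1 * (E0 + dist x x')"
    have B0: "0 \<le> B" using K1 GbNN n0 sq by (simp add: B_def E0_def)
    have "\<forall>\<theta>\<in>sphere 0 1. \<bar>(Fw g w r x \<theta> - Fw g w r' x' \<theta>)\<^sup>2\<bar> \<le> B\<^sup>2"
    proof
      fix \<theta> :: 'a assume "\<theta> \<in> sphere 0 1"
      then have "\<bar>Fw g w r x \<theta> - Fw g w r' x' \<theta>\<bar> \<le> B" using pw by (simp add: B_def)
      then have "\<bar>Fw g w r x \<theta> - Fw g w r' x' \<theta>\<bar>\<^sup>2 \<le> B\<^sup>2" by (rule power_mono) simp
      then show "\<bar>(Fw g w r x \<theta> - Fw g w r' x' \<theta>)\<^sup>2\<bar> \<le> B\<^sup>2" by simp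
    qed
    from ibound[OF opos' this] have "(LINT \<theta>|surf. (Fw g w r x \<theta> - Fw g w r' x' \<theta>)\<^sup>2) \<le> B\<^sup>2 * om"
      by (simp add: om_def)
    then have "norm2 (\<lambda>\<theta>. Fw g w r x \<theta> - Fw g w r' x' \<theta>) \<le> sqrt (B\<^sup>2 * om)"
      unfolding norm2_def by (rule real_sqrt_le_mono)
    also have "\<dots> = B * sqrt om" using B0 by (simp add: real_sqrt_mult)
    also have "\<dots> = K1 * Gb * n + K1 * sqrt om * dist x x'"
      using sq by (simp add: B_def E0_def algebra_simps)
    also have "\<dots> \<le> (K1 * Gb + K1 * sqrt om) * (n + dist x x')"
    proof -
      have "0 \<le> K1 * Gb * dist x x'" "0 \<le> K1 * sqrt om * n" using K1 GbNN sq n0 by simp_all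
      then show ?thesis by (simp add: algebra_simps)
    qed
    finally show ?thesis by (simp add: n_def)
  qed
  have P2: "normInf (\<lambda>\<theta>. Fw g w r x \<theta> - Fw g w r' x' \<theta>) \<le> (K1 * Gb + K1) * (normInf (\<lambda>\<theta>. r \<theta> - r' \<theta>) + dist x x')"
    if rx: "(r, x) \<in> Aeset g \<alpha> normInf a" and rx': "(r', x') \<in> Aeset g \<alpha> normInf a" for r x r' x'
  proof -
    have rc: "continuous_on (sphere 0 1) r" "continuous_on (sphere 0 1) r'" using rcA rx rx' by blast+
    have dc: "continuous_on (sphere 0 1) (\<lambda>\<theta>. r \<theta> - r' \<theta>)" using rc by (intro continuous_intros)
    define n where "n = normInf (\<lambda>\<theta>. r \<theta> - r' \<theta>)"
    have dle: "\<forall>\<theta>\<in>sphere 0 1. \<bar>r \<theta> - r' \<theta>\<bar> \<le> n" using le_normInf[OF dc] by (simp add: n_def)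
    have n0: "0 \<le> n" using dle z0 by (meson abs_ge_zero order_trans)
    define E0 where "E0 = Gb * n"
    have E: "\<forall>\<theta>\<in>sphere 0 1. \<bar>conv r g \<theta> - conv r' g \<theta>\<bar> \<le> E0"
      using cDiff[OF rc] cInf[OF dle] by (simp add: E0_def)
    have pw: "\<forall>\<theta>\<in>sphere 0 1. \<bar>Fw g w r x \<theta> - Fw g w r' x' \<theta>\<bar> \<le> K1 * (E0 + dist x x')"
      using dF AeI[OF rx] AeI[OF rx'] E by blast
    then have "normInf (\<lambda>\<theta>. Fw g w r x \<theta> - Fw g w r' x' \<theta>) \<le> K1 * (E0 + dist x x')"
      by (rule normInf_le)
    also have "\<dots> \<le> (K1 * Gb + K1) * (n + dist x x')"
    proof -
      have "0 \<le> K1 * Gb * dist x x'" "0 \<le> K1 * n" using K1 GbNN n0 by simp_all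
      then show ?thesis by (simp add: E0_def algebra_simps)
    qed
    finally show ?thesis by (simp add: n_def)
  qed
  have P3: "\<forall>(r, x)\<in>Aeset g \<alpha> normInf a. lipschitz_on M0 (sphere 0 1) (Fw g w r x)"
    using lipF AeI by blast
  have P4: "\<forall>(r, x)\<in>Aeset g \<alpha> norm2 a. \<forall>\<theta>\<in>sphere 0 1. m \<le> Fw g w r x \<theta> \<and> Fw g w r x \<theta> \<le> M"
    using bF Ae2I by blast
  show ?thesis
  proof (intro conjI)
    show "\<exists>L. \<forall>(r, x)\<in>Aeset g \<alpha> normInf a. \<forall>(r', x')\<in>Aeset g \<alpha> normInf a.
        norm2 (\<lambda>\<theta>. Fw g w r x \<theta> - Fw g w r' x' \<theta>) \<le> L * (norm2 (\<lambda>\<theta>. r \<theta> - r' \<theta>) + dist x x')"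
      using P1 by blast
    show "\<exists>L. \<forall>(r, x)\<in>Aeset g \<alpha> normInf a. \<forall>(r', x')\<in>Aeset g \<alpha> normInf a.
        normInf (\<lambda>\<theta>. Fw g w r x \<theta> - Fw g w r' x' \<theta>) \<le> L * (normInf (\<lambda>\<theta>. r \<theta> - r' \<theta>) + dist x x')"
      using P2 by blast
    show "\<exists>M. \<forall>(r, x)\<in>Aeset g \<alpha> normInf a. lipschitz_on M (sphere 0 1) (Fw g w r x)"
      using P3 by blast
    show "\<exists>m M. 0 < m \<and> (\<forall>(r, x)\<in>Aeset g \<alpha> norm2 a. \<forall>\<theta>\<in>sphere 0 1.
        m \<le> Fw g w r x \<theta> \<and> Fw g w r x \<theta> \<le> M)"
      using m P4 by blast
  qed
qed

end
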